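(* Let $\sigma$ be a meromorphic nonlinearity on $\mathbb{C}$ satisfying the SAC, and let $\{\beta_s\}_{s\in\mathcal{I}}$ be a nonempty finite set of nonzero real numbers. Let $\Gamma$ be the set of $(\gamma_s)_{s\in\mathcal{I}}\in\mathbb{R}^{\mathcal{I}}$ such that $(\zeta,\{(\alpha_s,\beta_s,\gamma_s)\}_{s\in\mathcal{I}})$ is an affine symmetry of $\sigma$ for some $\zeta\in\mathbb{R}$ and nonzero real numbers $\{\alpha_s\}_{s\in\mathcal{I}}$. Then $\Gamma$ is a (possibly empty) countable union of parallel lines in $\mathbb{R}^{\mathcal{I}}$; more precisely, there exists a countable set $\Gamma'\subset\mathbb{R}^{\mathcal{I}}$ such that $\Gamma=\bigcup_{\gamma'\in\Gamma'}\{(\gamma'_s+t\beta_s)_{s\in\mathcal{I}}:t\in\mathbb{R}\}$.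
   Context: A meromorphic nonlinearity is a meromorphic function $\sigma$ on $\mathbb{C}$ whose restriction to $\mathbb{R}$ is a nonlinearity, i.e. continuous real-valued and not of the form $t\mapsto at+b$. SAC (simple alignment condition): for every finite set of real triples $\{(\alpha_s,\beta_s,\gamma_s)\}$, if the set of poles of $f=\sum_s\alpha_s\sigma(\beta_s\cdot+\gamma_s)$ is bounded, then $f$ is constant on $\mathbb{C}$. An affine symmetry of $\sigma$ is $(\zeta,\{(\alpha_s,\beta_s,\gamma_s)\}_{s\in\mathcal{I}})$ with $\mathcal{I}$ nonempty finite, real entries, $\sum_s\alpha_s\sigma(\beta_st+\gamma_s)=\zeta$ for all $t\in\mathbb{R}$, and no proper $\mathcal{I}'\subsetneq\mathcal{I}$ such that $\{\sigma(\beta_s\cdot+\gamma_s)\}_{s\in\mathcal{I}'}\cup\{\mathbf1\}$ is linearly dependent. *)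

theory Defs
  imports "HOL-Complex_Analysis.Complex_Analysis"
begin

definition meromorphic_nonlinearity :: "(complex \<Rightarrow> complex) \<Rightarrow> bool" where
  "meromorphic_nonlinearity \<sigma> \<longleftrightarrow>
     \<sigma> meromorphic_on UNIV \<and>
     (\<forall>x::real. \<sigma> analytic_on {complex_of_real x}) \<and>
     (\<forall>x::real. \<sigma> (complex_of_real x) \<in> \<real>) \<and>
     \<not> (\<exists>a b::real. \<forall>t::real. \<sigma> (complex_of_real t) = complex_of_real (a * t + b))"

text \<open>A finite set of real triples (alpha, beta, gamma);
"constant on C" is understood for the meromorphic function f, i.e. f agrees with a
constant outside a discrete (sparse) set.\<close>
definition SAC :: "(complex \<Rightarrow> complex) \<Rightarrow> bool" where
  "SAC \<sigma> \<longleftrightarrow>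
     (\<forall>T :: (real \<times> real \<times> real) set. finite T \<longrightarrow>
        (let f = (\<lambda>z. \<Sum>(a, b, c)\<in>T. complex_of_real a * \<sigma> (complex_of_real b * z + complex_of_real c))
         in bounded {z. is_pole f z} \<longrightarrow> (\<exists>k. eventually (\<lambda>z. f z = k) (cosparse UNIV))))"

definition lin_dep_with_one ::
  "(complex \<Rightarrow> complex) \<Rightarrow> 'i set \<Rightarrow> ('i \<Rightarrow> real) \<Rightarrow> ('i \<Rightarrow> real) \<Rightarrow> bool" where
  "lin_dep_with_one \<sigma> J \<beta> \<gamma> \<longleftrightarrow>
     (\<exists>(c :: 'i \<Rightarrow> real) (c0 :: real). (c0 \<noteq> 0 \<or> (\<exists>s\<in>J. c s \<noteq> 0)) \<and>
        (\<forall>t::real. (\<Sum>s\<in>J. complex_of_real (c s) * \<sigma> (complex_of_real (\<beta> s * t + \<gamma> s)))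
                    + complex_of_real c0 = 0))"

definition affine_symmetry ::
  "(complex \<Rightarrow> complex) \<Rightarrow> real \<Rightarrow> 'i set \<Rightarrow> ('i \<Rightarrow> real) \<Rightarrow> ('i \<Rightarrow> real) \<Rightarrow> ('i \<Rightarrow> real) \<Rightarrow> bool" where
  "affine_symmetry \<sigma> \<zeta> I \<alpha> \<beta> \<gamma> \<longleftrightarrow>
     finite I \<and> I \<noteq> {} \<and>
     (\<forall>t::real. (\<Sum>s\<in>I. complex_of_real (\<alpha> s) * \<sigma> (complex_of_real (\<beta> s * t + \<gamma> s)))
                 = complex_of_real \<zeta>) \<and>
     \<not> (\<exists>J. J \<subset> I \<and> lin_dep_with_one \<sigma> J \<beta> \<gamma>)"

end

theory Submission
  imports Defs
begin

lemma affine_filterlim: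
  fixes b c :: complex
  assumes "b \<noteq> 0"
  shows "filterlim (\<lambda>w. b * w + c) (at (b * z + c)) (at z)"
proof -
  have "((\<lambda>w. b * w + c) \<longlongrightarrow> b * z + c) (at z)"
    by (intro tendsto_intros)
  moreover have "eventually (\<lambda>w. b * w + c \<in> UNIV \<and> b * w + c \<noteq> b * z + c) (at z)"
    using assms by (auto simp: eventually_at_filter)
  ultimately show ?thesis by (simp add: filterlim_at)
qed

lemma term_limit:
  assumes mero: "\<sigma> meromorphic_on UNIV" and b: "b \<noteq> (0::real)"
    and np: "\<not> is_pole \<sigma> (complex_of_real b * z + complex_of_real c)"
  shows "\<exists>l. ((\<lambda>w. complex_of_real a * \<sigma> (complex_of_real b * w + complex_of_real c)) \<longlongrightarrow> l) (at z)"
proof -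
  have "not_essential \<sigma> (complex_of_real b * z + complex_of_real c)"
    using mero by (simp add: meromorphic_on_altdef)
  with np obtain l where l: "(\<sigma> \<longlongrightarrow> l) (at (complex_of_real b * z + complex_of_real c))"
    unfolding not_essential_def by blast
  have "((\<lambda>w. \<sigma> (complex_of_real b * w + complex_of_real c)) \<longlongrightarrow> l) (at z)"
    using filterlim_compose[OF l affine_filterlim] b by auto
  then show ?thesis by (intro exI[of _ "complex_of_real a * l"] tendsto_intros)
qed

lemma sum_limit:
  fixes A :: "'i set"
  assumes mero: "\<sigma> meromorphic_on UNIV" and b: "\<forall>s. \<beta> s \<noteq> (0::real)"
    and np: "\<forall>s\<in>A. \<not> is_pole \<sigma> (complex_of_real (\<beta> s) * z + complex_of_real (\<gamma> s))"
  shows "\<exists>l. ((\<lambda>w. \<Sum>s\<in>A. complex_of_real (\<alpha> s) * \<sigma> (complex_of_real (\<beta> s) * w + complex_of_real (\<gamma> s))) \<longlongrightarrow> l) (at z)"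
proof -
  have "\<forall>s\<in>A. \<exists>l. ((\<lambda>w. complex_of_real (\<alpha> s) * \<sigma> (complex_of_real (\<beta> s) * w + complex_of_real (\<gamma> s))) \<longlongrightarrow> l) (at z)"
    using term_limit[OF mero] b np by blast
  then obtain L where "\<forall>s\<in>A. ((\<lambda>w. complex_of_real (\<alpha> s) * \<sigma> (complex_of_real (\<beta> s) * w + complex_of_real (\<gamma> s))) \<longlongrightarrow> L s) (at z)"
    by metis
  then show ?thesis by (intro exI[of _ "\<Sum>s\<in>A. L s"] tendsto_sum) auto
qed

lemma sum_mero:
  assumes mero: "\<sigma> meromorphic_on UNIV"
  shows "(\<lambda>w. \<Sum>s\<in>A. complex_of_real (\<alpha> s) * \<sigma> (complex_of_real (\<beta> s) * w + complex_of_real (\<gamma> s))) meromorphic_on UNIV"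
proof -
  have "(\<lambda>w. \<sigma> (complex_of_real (\<beta> s) * w + complex_of_real (\<gamma> s))) meromorphic_on UNIV" for s
    by (rule meromorphic_on_compose[OF mero]) (auto intro!: analytic_intros)
  then show ?thesis by (intro meromorphic_intros)
qed

lemma identity_real:
  assumes mero: "F meromorphic_on UNIV" and eq: "\<forall>t::real. F (complex_of_real t) = k"
  shows "eventually (\<lambda>w. F w = k) (at z)"
proof -
  have "\<not> eventually (\<lambda>w. F w \<noteq> k) (at 0)"
  proof
    assume "eventually (\<lambda>w. F w \<noteq> k) (at 0)"
    then obtain e where e: "e > 0" "\<And>w. w \<noteq> 0 \<Longrightarrow> dist w 0 < e \<Longrightarrow> F w \<noteq> k"
      unfolding eventually_at by auto
    have "F (complex_of_real (e/2)) \<noteq> k" using e by (intro e(2)) auto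
    moreover have "F (complex_of_real (e/2)) = k" using eq by blast
    ultimately show False by blast
  qed
  then have "\<not> eventually (\<lambda>w. F w \<noteq> k) (cosparse UNIV)"
    by (auto simp: eventually_cosparse_open_eq)
  then have "eventually (\<lambda>w. F w = k) (cosparse UNIV)"
    using meromorphic_imp_constant_or_avoid[OF mero] by auto
  then show ?thesis by (auto simp: eventually_cosparse_open_eq)
qed


definition Dset :: "(complex \<Rightarrow> complex) \<Rightarrow> ('i \<Rightarrow> real) \<Rightarrow> real set" where
  "Dset \<sigma> \<beta> = {d. \<exists>s s' p p'. is_pole \<sigma> p \<and> is_pole \<sigma> p' \<and>
      complex_of_real d = p / complex_of_real (\<beta> s) - p' / complex_of_real (\<beta> s')}"

definition Gset :: "(complex \<Rightarrow> complex) \<Rightarrow> ('i \<Rightarrow> real) \<Rightarrow> real set" where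
  "Gset \<sigma> \<beta> = sum_list ` lists (Dset \<sigma> \<beta>)"

lemma countable_Gset:
  fixes \<beta> :: "'i::finite \<Rightarrow> real"
  assumes mero: "\<sigma> meromorphic_on UNIV"
  shows "countable (Gset \<sigma> \<beta>)"
proof -
  have "{w. \<not> \<sigma> analytic_on {w}} sparse_in UNIV"
    using meromorphic_on_imp_sparse_singularities[OF mero] .
  then have "countable (UNIV \<inter> {w. \<not> \<sigma> analytic_on {w}})"
    by (intro sparse_imp_countable) auto
  moreover have "{p. is_pole \<sigma> p} \<subseteq> UNIV \<inter> {w. \<not> \<sigma> analytic_on {w}}"
    using analytic_at_imp_no_pole by blast
  ultimately have P: "countable {p. is_pole \<sigma> p}" by (rule countable_subset[rotated])
  let ?P = "{p. is_pole \<sigma> p}"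
  have "Dset \<sigma> \<beta> \<subseteq> (\<lambda>(s, s', p, p'). Re (p / complex_of_real (\<beta> s) - p' / complex_of_real (\<beta> s')))
          ` (UNIV \<times> UNIV \<times> ?P \<times> ?P)"
  proof
    fix d assume "d \<in> Dset \<sigma> \<beta>"
    then obtain s s' p p' where "is_pole \<sigma> p" "is_pole \<sigma> p'"
      "complex_of_real d = p / complex_of_real (\<beta> s) - p' / complex_of_real (\<beta> s')"
      unfolding Dset_def by blast
    show "d \<in> (\<lambda>(s, s', p, p'). Re (p / complex_of_real (\<beta> s) - p' / complex_of_real (\<beta> s')))
          ` (UNIV \<times> UNIV \<times> ?P \<times> ?P)"
    proof (rule image_eqI[of _ _ "(s, s', p, p')"])
      have "d = Re (complex_of_real d)" by simp
      also have "\<dots> = Re (p / complex_of_real (\<beta> s) - p' / complex_of_real (\<beta> s'))"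
        by (simp only: \<open>complex_of_real d = _\<close>)
      finally show "d = (\<lambda>(s, s', p, p'). Re (p / complex_of_real (\<beta> s) - p' / complex_of_real (\<beta> s'))) (s, s', p, p')"
        by simp
      show "(s, s', p, p') \<in> UNIV \<times> UNIV \<times> ?P \<times> ?P" using \<open>is_pole \<sigma> p\<close> \<open>is_pole \<sigma> p'\<close> by simp
    qed
  qed
  moreover have "countable ((\<lambda>(s, s', p, p'). Re (p / complex_of_real (\<beta> s) - p' / complex_of_real (\<beta> s')))
          ` (UNIV \<times> UNIV \<times> ?P \<times> ?P))"
  proof (rule countable_image)
    have cU: "countable (UNIV :: 'i set)" by (rule countable_finite) simp
    show "countable ((UNIV :: 'i set) \<times> (UNIV :: 'i set) \<times> ?P \<times> ?P)"
    proof -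
      have c1: "countable (?P \<times> ?P)" by (rule countable_SIGMA[OF P P])
      have c2: "countable ((UNIV :: 'i set) \<times> ?P \<times> ?P)" by (rule countable_SIGMA[OF cU c1])
      show ?thesis by (rule countable_SIGMA[OF cU c2])
    qed
  qed
  ultimately have "countable (Dset \<sigma> \<beta>)" by (rule countable_subset)
  then show ?thesis unfolding Gset_def by (rule countable_image[OF countable_lists])
qed

lemma term_real_cont:
  assumes an: "\<forall>x::real. \<sigma> analytic_on {complex_of_real x}"
  shows "isCont (\<lambda>w. complex_of_real a * \<sigma> (complex_of_real b * w + complex_of_real c)) (complex_of_real t)"
proof -
  have c1: "isCont (\<lambda>w. complex_of_real b * w + complex_of_real c) (complex_of_real t)"
    by (intro continuous_intros)
  have "isCont \<sigma> (complex_of_real (b * t + c))"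
    using an analytic_at_imp_isCont by blast
  then have c2: "isCont \<sigma> (complex_of_real b * complex_of_real t + complex_of_real c)" by simp
  have "isCont (\<lambda>w. \<sigma> (complex_of_real b * w + complex_of_real c)) (complex_of_real t)"
    using isCont_o2[OF c1 c2] .
  then show ?thesis by (rule isCont_mult[OF continuous_const])
qed

lemma sum_real_cont:
  assumes an: "\<forall>x::real. \<sigma> analytic_on {complex_of_real x}"
  shows "isCont (\<lambda>w. \<Sum>s\<in>A. complex_of_real (\<alpha> s) * \<sigma> (complex_of_real (\<beta> s) * w + complex_of_real (\<gamma> s))) (complex_of_real t)"
  by (rule isCont_sum) (intro ballI term_real_cont[OF an])

lemma Gset_add:
  assumes "x \<in> Gset \<sigma> \<beta>" "d \<in> Dset \<sigma> \<beta>"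
  shows "d + x \<in> Gset \<sigma> \<beta>"
proof -
  obtain xs where "xs \<in> lists (Dset \<sigma> \<beta>)" "x = sum_list xs"
    using assms(1) unfolding Gset_def by blast
  then show ?thesis unfolding Gset_def
    using assms(2) by (intro image_eqI[of _ _ "d # xs"]) auto
qed

lemma Gset_0: "0 \<in> Gset \<sigma> \<beta>"
  unfolding Gset_def by (intro image_eqI[of _ _ "[]"]) auto

lemma core:
  fixes \<sigma> :: "complex \<Rightarrow> complex" and \<alpha> \<beta> \<gamma> :: "'i::finite \<Rightarrow> real"
  assumes mn: "meromorphic_nonlinearity \<sigma>" and sac: "SAC \<sigma>"
    and b: "\<forall>s. \<beta> s \<noteq> 0" and a: "\<forall>s. \<alpha> s \<noteq> 0"
    and sym: "affine_symmetry \<sigma> \<zeta> UNIV \<alpha> \<beta> \<gamma>"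
  shows "\<gamma> s / \<beta> s - \<gamma> s0 / \<beta> s0 \<in> Gset \<sigma> \<beta>"
proof (rule ccontr)
  assume nJ: "\<gamma> s / \<beta> s - \<gamma> s0 / \<beta> s0 \<notin> Gset \<sigma> \<beta>"
  have mero: "\<sigma> meromorphic_on UNIV" and an: "\<forall>x::real. \<sigma> analytic_on {complex_of_real x}"
    and rl: "\<forall>x::real. \<sigma> (complex_of_real x) \<in> \<real>"
    using mn unfolding meromorphic_nonlinearity_def by blast+
  have symeq: "\<forall>t::real. (\<Sum>s\<in>UNIV. complex_of_real (\<alpha> s) * \<sigma> (complex_of_real (\<beta> s * t + \<gamma> s)))
                 = complex_of_real \<zeta>"
    and nodep: "\<not> (\<exists>J. J \<subset> UNIV \<and> lin_dep_with_one \<sigma> J \<beta> \<gamma>)"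
    using sym unfolding affine_symmetry_def by blast+
  define J where "J = {s. \<gamma> s / \<beta> s - \<gamma> s0 / \<beta> s0 \<in> Gset \<sigma> \<beta>}"
  have s0J: "s0 \<in> J" unfolding J_def using Gset_0 by simp
  have sJ: "s \<notin> J" unfolding J_def using nJ by simp
  have JU: "J \<subset> UNIV" using sJ by auto
  have clos: "s2 \<in> J"
    if "s1 \<in> J" "is_pole \<sigma> (complex_of_real (\<beta> s1) * z + complex_of_real (\<gamma> s1))"
       "is_pole \<sigma> (complex_of_real (\<beta> s2) * z + complex_of_real (\<gamma> s2))" for s1 s2 z
  proof -
    define d where "d = \<gamma> s2 / \<beta> s2 - \<gamma> s1 / \<beta> s1"
    have "complex_of_real d = (complex_of_real (\<beta> s2) * z + complex_of_real (\<gamma> s2)) / complex_of_real (\<beta> s2)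
        - (complex_of_real (\<beta> s1) * z + complex_of_real (\<gamma> s1)) / complex_of_real (\<beta> s1)"
      using b unfolding d_def by (simp add: field_simps)
    then have "d \<in> Dset \<sigma> \<beta>" unfolding Dset_def using that(2,3) by blast
    from Gset_add[OF _ this, of "\<gamma> s1 / \<beta> s1 - \<gamma> s0 / \<beta> s0"] that(1)
    show ?thesis unfolding J_def d_def by simp
  qed
  define H where "H = (\<lambda>w. \<Sum>s\<in>J. complex_of_real (\<alpha> s) * \<sigma> (complex_of_real (\<beta> s) * w + complex_of_real (\<gamma> s)))"
  define L where "L = (\<lambda>w. \<Sum>s\<in>UNIV - J. complex_of_real (\<alpha> s) * \<sigma> (complex_of_real (\<beta> s) * w + complex_of_real (\<gamma> s)))"
  define F where "F = (\<lambda>w. \<Sum>s\<in>UNIV. complex_of_real (\<alpha> s) * \<sigma> (complex_of_real (\<beta> s) * w + complex_of_real (\<gamma> s)))"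
  have split: "F w = H w + L w" for w
    unfolding F_def H_def L_def by (rule sum.subset_diff[of J UNIV, simplified, THEN trans]) (simp add: add.commute)
  have Freal: "\<forall>t::real. F (complex_of_real t) = complex_of_real \<zeta>"
    using symeq unfolding F_def by simp
  have Fev: "eventually (\<lambda>w. F w = complex_of_real \<zeta>) (at z)" for z
  proof -
    have Fm: "F meromorphic_on UNIV" unfolding F_def by (rule sum_mero[OF mero])
    show ?thesis by (rule identity_real[OF Fm Freal])
  qed
  have nopole: "\<not> is_pole H z" for z
  proof
    assume pH: "is_pole H z"
    show False
    proof (cases "\<exists>s1\<in>J. is_pole \<sigma> (complex_of_real (\<beta> s1) * z + complex_of_real (\<gamma> s1))")
      case False
      then obtain l where "(H \<longlongrightarrow> l) (at z)"
        using sum_limit[OF mero b, of J z \<gamma> \<alpha>] unfolding H_def by blast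
      then show False using pH not_tendsto_and_filterlim_at_infinity[of "at z" H l]
        unfolding is_pole_def by simp
    next
      case True
      then obtain s1 where s1: "s1 \<in> J" "is_pole \<sigma> (complex_of_real (\<beta> s1) * z + complex_of_real (\<gamma> s1))"
        by blast
      have "\<forall>s2\<in>UNIV - J. \<not> is_pole \<sigma> (complex_of_real (\<beta> s2) * z + complex_of_real (\<gamma> s2))"
        using clos[OF s1] by blast
      then obtain l where l: "(L \<longlongrightarrow> l) (at z)"
        using sum_limit[OF mero b, of "UNIV - J" z \<gamma> \<alpha>] unfolding L_def by blast
      have "(F \<longlongrightarrow> complex_of_real \<zeta>) (at z)"
        using Fev by (rule tendsto_eventually)
      then have "((\<lambda>w. F w - L w) \<longlongrightarrow> complex_of_real \<zeta> - l) (at z)"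
        using l by (intro tendsto_intros)
      moreover have "(\<lambda>w. F w - L w) = H" using split by (auto simp: fun_eq_iff)
      ultimately have "(H \<longlongrightarrow> complex_of_real \<zeta> - l) (at z)" by simp
      then show False using pH not_tendsto_and_filterlim_at_infinity[of "at z" H]
        unfolding is_pole_def by simp
    qed
  qed
  define tr where "tr = (\<lambda>s. (\<alpha> s, \<beta> s, \<gamma> s))"
  have inj: "inj_on tr J"
  proof (rule inj_onI, rule ccontr)
    fix x y assume xy: "x \<in> J" "y \<in> J" "tr x = tr y" "x \<noteq> y"
    have "lin_dep_with_one \<sigma> {x, y} \<beta> \<gamma>"
      unfolding lin_dep_with_one_def
    proof (intro exI[of _ "\<lambda>s. if s = x then 1 else -1"] exI[of _ 0] conjI allI)
      have eqs: "\<beta> y = \<beta> x" "\<gamma> y = \<gamma> x" using xy(3) by (auto simp: tr_def)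
      fix t :: real
      show "(\<Sum>s\<in>{x, y}. complex_of_real (if s = x then 1 else -1) * \<sigma> (complex_of_real (\<beta> s * t + \<gamma> s))) + complex_of_real 0 = 0"
        using xy(4) eqs by simp
    qed simp
    moreover have "{x, y} \<subset> UNIV" using xy JU by auto
    ultimately show False using nodep by blast
  qed
  let ?f = "\<lambda>z. \<Sum>(a, b, c)\<in>tr ` J. complex_of_real a * \<sigma> (complex_of_real b * z + complex_of_real c)"
  have fH: "?f = H"
    unfolding H_def fun_eq_iff by (simp only: sum.reindex[OF inj] o_def) (simp add: tr_def)
  have fH': "(\<Sum>(a, b, c)\<in>tr ` J. complex_of_real a * \<sigma> (complex_of_real b * z + complex_of_real c)) = H z" for z
    using fH by (simp add: fun_eq_iff)
  have fin: "finite (tr ` J)" by simp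
  have S: "bounded {z. is_pole ?f z} \<longrightarrow> (\<exists>k. eventually (\<lambda>z. ?f z = k) (cosparse UNIV))"
    using sac[unfolded SAC_def, rule_format, OF fin] unfolding Let_def .
  have "bounded {z. is_pole H z}" using nopole by simp
  then obtain k where k: "eventually (\<lambda>z. H z = k) (cosparse UNIV)"
    using S unfolding fH' by blast
  have Hk: "H (complex_of_real t) = k" for t
  proof -
    have c: "isCont H (complex_of_real t)"
      unfolding H_def by (rule sum_real_cont[OF an])
    have "eventually (\<lambda>z. H z = k) (at (complex_of_real t))"
      using k by (auto simp: eventually_cosparse_open_eq)
    then have "(H \<longlongrightarrow> k) (at (complex_of_real t))" by (rule tendsto_eventually)
    moreover have "(H \<longlongrightarrow> H (complex_of_real t)) (at (complex_of_real t))"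
      using c by (simp add: isCont_def)
    ultimately show ?thesis using tendsto_unique[OF at_neq_bot] by metis
  qed
  have "H (complex_of_real 0) \<in> \<real>"
    unfolding H_def using rl
    by (intro sum_in_Reals Reals_mult) (simp_all add: rl)
  then have kR: "complex_of_real (Re k) = k" using Hk[of 0] by (simp add: Reals_def)
  have "lin_dep_with_one \<sigma> J \<beta> \<gamma>"
    unfolding lin_dep_with_one_def
  proof (intro exI[of _ \<alpha>] exI[of _ "- Re k"] conjI allI)
    show "- Re k \<noteq> 0 \<or> (\<exists>s\<in>J. \<alpha> s \<noteq> 0)" using s0J a by blast
    fix t :: real
    have eqH: "(\<Sum>s\<in>J. complex_of_real (\<alpha> s) * \<sigma> (complex_of_real (\<beta> s * t + \<gamma> s))) = H (complex_of_real t)"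
      unfolding H_def by simp
    then show "(\<Sum>s\<in>J. complex_of_real (\<alpha> s) * \<sigma> (complex_of_real (\<beta> s * t + \<gamma> s))) + complex_of_real (- Re k) = 0"
    proof -
      have "complex_of_real (- Re k) = - k" using kR by (metis of_real_minus)
      then show ?thesis using Hk[of t] eqH by simp
    qed
  qed
  then show False using nodep JU by blast
qed


lemma shift_sym:
  assumes sym: "affine_symmetry \<sigma> \<zeta> I \<alpha> \<beta> \<gamma>"
  shows "affine_symmetry \<sigma> \<zeta> I \<alpha> \<beta> (\<lambda>s. \<gamma> s + u * \<beta> s)"
proof -
  have f: "finite I" "I \<noteq> {}"
    and eq: "\<forall>t::real. (\<Sum>s\<in>I. complex_of_real (\<alpha> s) * \<sigma> (complex_of_real (\<beta> s * t + \<gamma> s))) = complex_of_real \<zeta>"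
    and nd: "\<not> (\<exists>J. J \<subset> I \<and> lin_dep_with_one \<sigma> J \<beta> \<gamma>)"
    using sym unfolding affine_symmetry_def by blast+
  have ar: "\<beta> s * t + (\<gamma> s + u * \<beta> s) = \<beta> s * (t + u) + \<gamma> s" for s t by (simp add: algebra_simps)
  have eq': "\<forall>t::real. (\<Sum>s\<in>I. complex_of_real (\<alpha> s) * \<sigma> (complex_of_real (\<beta> s * t + (\<gamma> s + u * \<beta> s)))) = complex_of_real \<zeta>"
  proof
    fix t :: real show "(\<Sum>s\<in>I. complex_of_real (\<alpha> s) * \<sigma> (complex_of_real (\<beta> s * t + (\<gamma> s + u * \<beta> s)))) = complex_of_real \<zeta>"
      unfolding ar using eq by blast
  qed
  have nd': "\<not> (\<exists>J. J \<subset> I \<and> lin_dep_with_one \<sigma> J \<beta> (\<lambda>s. \<gamma> s + u * \<beta> s))"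
  proof
    assume "\<exists>J. J \<subset> I \<and> lin_dep_with_one \<sigma> J \<beta> (\<lambda>s. \<gamma> s + u * \<beta> s)"
    then obtain J c c0 where J: "J \<subset> I" and nz: "c0 \<noteq> 0 \<or> (\<exists>s\<in>J. c s \<noteq> 0)"
      and ceq: "\<forall>t::real. (\<Sum>s\<in>J. complex_of_real (c s) * \<sigma> (complex_of_real (\<beta> s * t + (\<gamma> s + u * \<beta> s)))) + complex_of_real c0 = 0"
      unfolding lin_dep_with_one_def by blast
    have ar2: "\<beta> s * (t - u) + (\<gamma> s + u * \<beta> s) = \<beta> s * t + \<gamma> s" for s t by (simp add: algebra_simps)
    have "\<forall>t::real. (\<Sum>s\<in>J. complex_of_real (c s) * \<sigma> (complex_of_real (\<beta> s * t + \<gamma> s))) + complex_of_real c0 = 0"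
    proof
      fix t :: real
      show "(\<Sum>s\<in>J. complex_of_real (c s) * \<sigma> (complex_of_real (\<beta> s * t + \<gamma> s))) + complex_of_real c0 = 0"
        using ceq[rule_format, of "t - u"] unfolding ar2 .
    qed
    then have "lin_dep_with_one \<sigma> J \<beta> \<gamma>" unfolding lin_dep_with_one_def using nz by blast
    then show False using nd J by blast
  qed
  show ?thesis unfolding affine_symmetry_def using f eq' nd' by blast
qed

theorem lemma8:
  fixes \<sigma> :: "complex \<Rightarrow> complex" and \<beta> :: "'i::finite \<Rightarrow> real"
  assumes "meromorphic_nonlinearity \<sigma>"
    and "SAC \<sigma>"
    and "\<forall>s. \<beta> s \<noteq> 0"
  shows "\<exists>\<Gamma>' :: ('i \<Rightarrow> real) set. countable \<Gamma>' \<and>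
     {\<gamma>. \<exists>\<zeta> \<alpha>. (\<forall>s. \<alpha> s \<noteq> 0) \<and> affine_symmetry \<sigma> \<zeta> UNIV \<alpha> \<beta> \<gamma>}
       = (\<Union>g\<in>\<Gamma>'. {(\<lambda>s. g s + t * \<beta> s) | t. True})"
proof -
  define \<Gamma> where "\<Gamma> = {\<gamma>. \<exists>\<zeta> \<alpha>. (\<forall>s. \<alpha> s \<noteq> 0) \<and> affine_symmetry \<sigma> \<zeta> UNIV \<alpha> \<beta> \<gamma>}"
  have mero: "\<sigma> meromorphic_on UNIV"
    using assms(1) unfolding meromorphic_nonlinearity_def by blast
  have shift: "(\<lambda>s. \<gamma> s + u * \<beta> s) \<in> \<Gamma>" if "\<gamma> \<in> \<Gamma>" for \<gamma> u
    using that shift_sym unfolding \<Gamma>_def by blast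
  define s0 :: 'i where "s0 = undefined"
  define \<Gamma>' where "\<Gamma>' = {\<gamma> \<in> \<Gamma>. \<gamma> s0 = 0}"
  have inG: "\<gamma> s / \<beta> s \<in> Gset \<sigma> \<beta>" if "\<gamma> \<in> \<Gamma>'" for \<gamma> s
  proof -
    from that obtain \<zeta> \<alpha> where a: "\<forall>s. \<alpha> s \<noteq> 0" and sym: "affine_symmetry \<sigma> \<zeta> UNIV \<alpha> \<beta> \<gamma>"
      and g0: "\<gamma> s0 = 0"
      unfolding \<Gamma>'_def \<Gamma>_def by blast
    have "\<gamma> s / \<beta> s - \<gamma> s0 / \<beta> s0 \<in> Gset \<sigma> \<beta>"
      by (rule core[OF assms(1,2,3) a sym])
    then show ?thesis using g0 by simp
  qed
  have "\<Gamma>' \<subseteq> (\<lambda>h s. \<beta> s * h s) ` (Pi\<^sub>E UNIV (\<lambda>_. Gset \<sigma> \<beta>))"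
  proof
    fix \<gamma> assume g: "\<gamma> \<in> \<Gamma>'"
    show "\<gamma> \<in> (\<lambda>h s. \<beta> s * h s) ` (Pi\<^sub>E UNIV (\<lambda>_. Gset \<sigma> \<beta>))"
    proof (rule image_eqI[of _ _ "\<lambda>s. \<gamma> s / \<beta> s"])
      show "\<gamma> = (\<lambda>s. \<beta> s * (\<gamma> s / \<beta> s))" using assms(3) by (simp add: fun_eq_iff)
      show "(\<lambda>s. \<gamma> s / \<beta> s) \<in> Pi\<^sub>E UNIV (\<lambda>_. Gset \<sigma> \<beta>)"
        using inG[OF g] by (simp add: PiE_UNIV_domain)
    qed
  qed
  moreover have "countable ((\<lambda>h s. \<beta> s * h s) ` (Pi\<^sub>E UNIV (\<lambda>_. Gset \<sigma> \<beta>)))"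
    by (rule countable_image, rule countable_PiE) (simp_all add: countable_Gset[OF mero])
  ultimately have cG: "countable \<Gamma>'" by (rule countable_subset)
  have "\<Gamma> = (\<Union>g\<in>\<Gamma>'. {(\<lambda>s. g s + t * \<beta> s) | t. True})"
  proof
    show "\<Gamma> \<subseteq> (\<Union>g\<in>\<Gamma>'. {(\<lambda>s. g s + t * \<beta> s) | t. True})"
    proof
      fix \<gamma> assume g: "\<gamma> \<in> \<Gamma>"
      define u where "u = - \<gamma> s0 / \<beta> s0"
      define g' where "g' = (\<lambda>s. \<gamma> s + u * \<beta> s)"
      have "g' \<in> \<Gamma>" unfolding g'_def by (rule shift[OF g])
      moreover have "g' s0 = 0" unfolding g'_def u_def using assms(3) by (simp add: field_simps)
      ultimately have "g' \<in> \<Gamma>'" unfolding \<Gamma>'_def by blast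
      moreover have "\<gamma> = (\<lambda>s. g' s + (- u) * \<beta> s)" unfolding g'_def by (simp add: fun_eq_iff)
      ultimately show "\<gamma> \<in> (\<Union>g\<in>\<Gamma>'. {(\<lambda>s. g s + t * \<beta> s) | t. True})" by blast
    qed
    show "(\<Union>g\<in>\<Gamma>'. {(\<lambda>s. g s + t * \<beta> s) | t. True}) \<subseteq> \<Gamma>"
    proof
      fix \<gamma> assume "\<gamma> \<in> (\<Union>g\<in>\<Gamma>'. {(\<lambda>s. g s + t * \<beta> s) | t. True})"
      then obtain g t where "g \<in> \<Gamma>'" "\<gamma> = (\<lambda>s. g s + t * \<beta> s)" by blast
      then show "\<gamma> \<in> \<Gamma>" using shift unfolding \<Gamma>'_def by blast
    qed
  qed
  then show ?thesis using cG unfolding \<Gamma>_def by blast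
qed

end
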